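(* Let $(Y_t,\lambda_t)_t$ be a strictly stationary INARCH(1) process, i.e. conditionally on the past $Y_t\sim\mathrm{Pois}(\lambda_t)$ with $\lambda_t=aY_{t-1}+b_0$, where $a\in(0,1)$ and $b_0\ge0$, and let $Y_0,\ldots,Y_n$ be observations of it. Define $w_t=\big(t-\frac{n+1}{2}\big)\big/\sqrt{\sum_{s=1}^n\big(s-\frac{n+1}{2}\big)^2}$ and $\widehat\theta_1=\sum_{t=1}^n w_tY_t$. Then, with $\sigma^2=b_0/(1-a)^3$, \[\widehat\theta_1\xrightarrow{d}\mathcal N(0,\sigma^2)\qquad (n\to\infty).\]
   Context: $\mathrm{Pois}(0)$ denotes the Dirac measure at $0$; "conditionally on the past" means conditionally on $\sigma(Y_s,\lambda_s: s<t)$. *)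

theory Defs
  imports "HOL-Probability.Probability"
begin

definition pois_prob :: "real \<Rightarrow> nat \<Rightarrow> real" where
  "pois_prob r k = (if r = 0 then (if k = 0 then 1 else 0) else pmf (poisson_pmf r) k)"

definition past :: "'a measure \<Rightarrow> (int \<Rightarrow> 'a \<Rightarrow> nat) \<Rightarrow> (int \<Rightarrow> 'a \<Rightarrow> real) \<Rightarrow> int \<Rightarrow> 'a measure" where
  "past M Y lam t = sigma (space M)
     (\<Union>s\<in>{..<t}. {Y s -` A \<inter> space M | A. True} \<union> {lam s -` B \<inter> space M | B. B \<in> sets borel})"

definition normal_law :: "real \<Rightarrow> real measure" where
  "normal_law s2 = (if s2 = 0 then return borel 0 else density lborel (normal_density 0 (sqrt s2)))"

definition trend_weight :: "nat \<Rightarrow> nat \<Rightarrow> real" where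
  "trend_weight n t = (real t - (real n + 1) / 2) /
      sqrt (\<Sum>s=1..n. (real s - (real n + 1) / 2)^2)"

end

theory Submission
  imports Defs "HOL-Real_Asymp.Real_Asymp"
begin

lemma exp1_le3: "exp (1::real) \<le> 3" using exp_le by simp
lemma T1: fixes z :: complex assumes "cmod z \<le> 1" shows "cmod (exp z - 1 - z) \<le> 3 * cmod z ^ 2"
proof -
  have "cmod (exp z - (\<Sum>i\<le>1. z^i / fact i)) \<le> exp (cmod z) * cmod z ^ Suc 1 / fact 1"
    by (rule Taylor_exp_field)
  moreover have "(\<Sum>i\<le>1. z^i / fact i) = 1 + z" by simp
  moreover have "exp (cmod z) \<le> 3" using assms exp1_le3 by (meson exp_le_cancel_iff order_trans)
  moreover have "exp (cmod z) * cmod z ^ 2 \<le> 3 * cmod z ^ 2"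
    using calculation(3) by (simp add: mult_right_mono)
  moreover have "exp z - 1 - z = exp z - (1 + z)" by (simp add: algebra_simps)
  ultimately show ?thesis by (metis (no_types, lifting) div_by_1 fact_1 order_trans power2_eq_square power_Suc2 power_one_right)
qed
lemma T2: fixes z :: complex assumes "cmod z \<le> 1" shows "cmod (exp z - 1 - z - z^2/2) \<le> 2 * cmod z ^ 3"
proof -
  have "cmod (exp z - (\<Sum>i\<le>2. z^i / fact i)) \<le> exp (cmod z) * cmod z ^ Suc 2 / fact 2"
    by (rule Taylor_exp_field)
  moreover have "(\<Sum>i\<le>2. z^i / fact i) = 1 + z + z^2/2" by (simp add: numeral_2_eq_2)
  moreover have "exp (cmod z) \<le> 3" using assms exp1_le3 by (meson exp_le_cancel_iff order_trans)
  moreover have "exp (cmod z) * cmod z ^ 3 / 2 \<le> 3 * cmod z ^ 3 / 2"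
    using calculation(3) by (simp add: mult_right_mono)
  ultimately have "cmod (exp z - (1 + z + z^2/2)) \<le> 3 * cmod z ^ 3 / 2" by simp
  moreover have "3 * cmod z ^ 3 / 2 \<le> 2 * cmod z ^ 3" by simp
  moreover have "exp z - 1 - z - z^2/2 = exp z - (1 + z + z^2/2)" by (simp add: algebra_simps)
  moreover have "0 \<le> cmod z ^ 3" by simp
  ultimately show ?thesis by (metis order_trans)
qed


lemma exp_m1_bound: fixes w :: complex assumes "cmod w \<le> 1"
  shows "cmod (exp w - 1) \<le> cmod w + 3 * cmod w ^ 2"
proof -
  have "cmod (exp w - 1) \<le> cmod (exp w - 1 - w) + cmod w"
    by (metis diff_add_cancel norm_triangle_ineq)
  then show ?thesis using T1[OF assms] by linarith
qed

definition bnd :: "real \<Rightarrow> real \<Rightarrow> real \<Rightarrow> nat \<Rightarrow> real" where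
  "bnd a U d n = (let B = 2*U/(1-a); c = 3*a*B^2 + a*d/(1-a) in
     (B + 2*real n*B^3 + B*((a*U/(1-a) + real n*c)/(1-a)) + U^2/(2*(1-a)^2))/(1-a))"

lemma det_zbound:
  fixes a U :: real and n :: nat and u :: "nat \<Rightarrow> real" and z :: "nat \<Rightarrow> complex"
  assumes a: "0 < a" "a < 1" and n: "1 \<le> n"
  and uU: "\<And>t. 1 \<le> t \<Longrightarrow> t \<le> n \<Longrightarrow> \<bar>u t\<bar> \<le> U"
  and small: "12 * U \<le> (1-a)^2"
  and zn: "z n = \<i> * complex_of_real (u n)"
  and zrec: "\<And>t. 1 \<le> t \<Longrightarrow> t < n \<Longrightarrow> z t = \<i> * complex_of_real (u t) + complex_of_real a * (exp (z (Suc t)) - 1)"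
  shows "\<And>t. 1 \<le> t \<Longrightarrow> t \<le> n \<Longrightarrow> cmod (z t) \<le> 2*U/(1-a)"
proof -
  define B where "B = 2*U/(1-a)"
  have U0: "0 \<le> U" using uU[of n] n by auto
  have B1: "B \<le> 1"
  proof -
    have "(1-a)^2 \<le> 1 - a" using a by (simp add: power2_eq_square mult_left_le_one_le)
    then have "2*U \<le> 1 - a" using small U0 by linarith
    then show ?thesis using a unfolding B_def by simp
  qed
  have UB: "U \<le> B" using a U0 unfolding B_def by (simp add: field_simps)
  have key: "U + a * (B + 3 * B^2) \<le> B"
  proof -
    have "3*a*B^2 \<le> 3*B^2" using a by (simp add: mult_right_mono)
    also have "3*B^2 = 12*U*U/(1-a)^2" unfolding B_def by (simp add: power2_eq_square field_simps)
    also have "\<dots> \<le> (1-a)^2*U/(1-a)^2" using small U0 a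
      by (intro divide_right_mono) (auto simp: mult_right_mono)
    also have "\<dots> = U" using a by simp
    finally have "3*a*B^2 \<le> U" .
    moreover have "U + a*B = B - U" unfolding B_def using a by (simp add: field_simps)
    ultimately show ?thesis by (simp add: algebra_simps)
  qed
  have main: "\<forall>j. j \<le> n - 1 \<longrightarrow> cmod (z (n - j)) \<le> B"
  proof
    fix j show "j \<le> n - 1 \<longrightarrow> cmod (z (n - j)) \<le> B"
    proof (induction j)
      case 0
      then show ?case using zn uU[of n] n UB by (simp add: norm_mult)
    next
      case (Suc j)
      show ?case
      proof
        assume j: "Suc j \<le> n - 1"
        define t where "t = n - Suc j"
        have t1: "1 \<le> t" "t < n" using j n unfolding t_def by auto
        have st: "Suc t = n - j" using j n unfolding t_def by auto
        have IH: "cmod (z (Suc t)) \<le> B" using Suc j st by auto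
        have "cmod (z t) \<le> cmod (\<i> * complex_of_real (u t)) + cmod (complex_of_real a * (exp (z (Suc t)) - 1))"
          using zrec[OF t1] norm_triangle_ineq by metis
        also have "\<dots> = \<bar>u t\<bar> + a * cmod (exp (z (Suc t)) - 1)" using a by (simp add: norm_mult)
        also have "\<dots> \<le> U + a * (B + 3 * B^2)"
        proof -
          have "cmod (exp (z (Suc t)) - 1) \<le> cmod (z (Suc t)) + 3 * cmod (z (Suc t))^2"
            using exp_m1_bound IH B1 by auto
          also have "\<dots> \<le> B + 3 * B^2" using IH by (intro add_mono mult_left_mono power_mono) auto
          finally show ?thesis using uU[of t] t1 a by (intro add_mono mult_left_mono) auto
        qed
        also have "\<dots> \<le> B" by (rule key)
        finally show "cmod (z (n - Suc j)) \<le> B" unfolding t_def .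
      qed
    qed
  qed
  fix t assume "1 \<le> t" "t \<le> n"
  then have "t = n - (n - t)" "n - t \<le> n - 1" by auto
  then show "cmod (z t) \<le> 2*U/(1-a)" using main unfolding B_def by metis
qed


lemma det_bound:
  fixes a U d s2 :: real and n :: nat and u :: "nat \<Rightarrow> real" and z :: "nat \<Rightarrow> complex"
  assumes a: "0 < a" "a < 1" and n: "2 \<le> n"
  and usum: "(\<Sum>t=1..n. u t) = 0" and usq: "(\<Sum>t=1..n. (u t)^2) = s2"
  and uU: "\<And>t. 1 \<le> t \<Longrightarrow> t \<le> n \<Longrightarrow> \<bar>u t\<bar> \<le> U"
  and ud: "\<And>t. 1 \<le> t \<Longrightarrow> t < n \<Longrightarrow> \<bar>u (Suc t) - u t\<bar> \<le> d"
  and small: "12 * U \<le> (1-a)^2"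
  and zn: "z n = \<i> * complex_of_real (u n)"
  and zrec: "\<And>t. 1 \<le> t \<Longrightarrow> t < n \<Longrightarrow> z t = \<i> * complex_of_real (u t) + complex_of_real a * (exp (z (Suc t)) - 1)"
  shows "cmod ((\<Sum>t=2..n. exp (z t) - 1) - complex_of_real (-s2/(2*(1-a)^3))) \<le> bnd a U d n"
proof -
  have ni: "cmod (\<i> * complex_of_real r) = \<bar>r\<bar>" for r by (simp add: norm_mult)
  define B where "B = 2*U/(1-a)"
  define c where "c = 3*a*B^2 + a*d/(1-a)"
  have zB: "\<And>t. 1 \<le> t \<Longrightarrow> t \<le> n \<Longrightarrow> cmod (z t) \<le> B"
    unfolding B_def using det_zbound[OF a _ uU small zn zrec] n by auto
  have U0: "0 \<le> U" using uU[of n] n by auto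
  have B1: "B \<le> 1"
  proof -
    have "(1-a)^2 \<le> 1 - a" using a by (simp add: power2_eq_square mult_left_le_one_le)
    then have "2*U \<le> 1 - a" using small U0 by linarith
    then show ?thesis using a unfolding B_def by simp
  qed
  have B0: "0 \<le> B" using U0 a unfolding B_def by simp
  have UB': "U/(1-a) \<le> B" using a U0 unfolding B_def by (intro divide_right_mono) auto
  define v where "v t = exp (z t) - 1" for t
  define y where "y t = \<i> * complex_of_real (u t / (1-a))" for t
  define e where "e t = z t - y t" for t
  define S where "S = (\<Sum>t=2..n. v t)"
  define Q where "Q = (\<Sum>t=2..n. (z t)^2)"
  define Qs where "Qs = (\<Sum>t=2..n. (y t)^2)"
  define E where "E = (\<Sum>t=2..n. cmod (e t))"
  define R where "R = (\<Sum>t=2..n. v t - z t - (z t)^2/2)"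
  obtain m where m: "n = Suc m" "1 \<le> m" using n by (cases n) auto
  have d0: "0 \<le> d" using ud[of 1] n by fastforce
  have en: "cmod (e n) \<le> a*U/(1-a)"
  proof -
    have "e n = - \<i> * complex_of_real (a * u n / (1-a))"
      unfolding e_def y_def zn using a by (simp add: field_simps)
    moreover have "cmod (- \<i> * complex_of_real r) = \<bar>r\<bar>" for r by (simp add: norm_mult)
    ultimately have "cmod (e n) = \<bar>a * u n / (1-a)\<bar>" by metis
    also have "\<dots> = a * \<bar>u n\<bar> / (1-a)" using a by (simp add: abs_mult)
    finally have "cmod (e n) = a * \<bar>u n\<bar> / (1-a)" .
    also have "\<dots> \<le> a*U/(1-a)" using uU[of n] n a by (intro divide_right_mono mult_left_mono) auto
    finally show ?thesis .
  qed
  have erec: "cmod (e t) \<le> a * cmod (e (Suc t)) + c" if t: "1 \<le> t" "t < n" for t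
  proof -
    have "e t = complex_of_real a * e (Suc t) + complex_of_real a * (v (Suc t) - z (Suc t))
        + \<i> * complex_of_real (a * (u (Suc t) - u t) / (1-a))"
    proof -
      have zt': "z t = \<i> * complex_of_real (u t) + complex_of_real a * v (Suc t)"
        using zrec[OF t] unfolding v_def .
      have ne: "1 - complex_of_real a \<noteq> 0" using a
        by (metis eq_iff_diff_eq_0 of_real_1 of_real_eq_iff order_less_irrefl)
      define K where "K = complex_of_real (1/(1-a))"
      have K: "K * (1 - complex_of_real a) = 1" unfolding K_def using a
        by (metis ne of_real_1 of_real_diff of_real_divide divide_self_if times_divide_eq_left mult_1)
      have yK: "y s = \<i> * complex_of_real (u s) * K" for s unfolding y_def K_def by simp
      have "e t - (complex_of_real a * e (Suc t) + complex_of_real a * (v (Suc t) - z (Suc t))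
        + \<i> * complex_of_real (a * (u (Suc t) - u t) / (1-a)))
        = \<i> * complex_of_real (u t) * (1 - K * (1 - complex_of_real a))"
      proof -
        have dK: "complex_of_real (x/(1-a)) = complex_of_real x * K" for x unfolding K_def by simp
        show ?thesis unfolding e_def yK zt' dK by (simp add: algebra_simps)
      qed
      then show ?thesis using K by simp
    qed
    then have "cmod (e t) \<le> cmod (complex_of_real a * e (Suc t)) + cmod (complex_of_real a * (v (Suc t) - z (Suc t)))
        + cmod (\<i> * complex_of_real (a * (u (Suc t) - u t) / (1-a)))"
      by (metis norm_triangle_ineq order_trans add_right_mono)
    also have "\<dots> = a * cmod (e (Suc t)) + a * cmod (v (Suc t) - z (Suc t)) + \<bar>a * (u (Suc t) - u t) / (1-a)\<bar>"
      by (simp only: ni norm_mult norm_of_real abs_of_pos[OF a(1)] complex_i_not_zero norm_ii mult_1)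
    also have "\<dots> = a * cmod (e (Suc t)) + a * cmod (v (Suc t) - z (Suc t)) + a * \<bar>u (Suc t) - u t\<bar> / (1-a)"
      using a by (simp add: abs_mult)
    also have "\<dots> \<le> a * cmod (e (Suc t)) + a * (3*B^2) + a * d / (1-a)"
    proof -
      have zS: "cmod (z (Suc t)) \<le> B" using zB t by auto
      have "cmod (v (Suc t) - z (Suc t)) \<le> 3 * cmod (z (Suc t))^2" unfolding v_def
        using T1 zS B1 by auto
      also have "\<dots> \<le> 3*B^2" using zS by (intro mult_left_mono power_mono) auto
      finally have 1: "a * cmod (v (Suc t) - z (Suc t)) \<le> a * (3*B^2)" using a by (simp add: mult_left_mono)
      have 2: "a * \<bar>u (Suc t) - u t\<bar> / (1-a) \<le> a * d / (1-a)"
        using ud[OF t] a by (intro divide_right_mono mult_left_mono) auto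
      show ?thesis using 1 2 by linarith
    qed
    also have "\<dots> = a * cmod (e (Suc t)) + c" unfolding c_def by simp
    finally show ?thesis .
  qed
  have c0: "0 \<le> c" unfolding c_def using a d0 by auto
  have Ebound: "(1-a) * E \<le> a*U/(1-a) + real n * c"
  proof -
    have E1: "E = (\<Sum>t=2..m. cmod (e t)) + cmod (e n)" unfolding E_def using m by simp
    have E2: "(\<Sum>t=2..m. cmod (e t)) \<le> (\<Sum>t=2..m. a * cmod (e (Suc t)) + c)"
      using m by (intro sum_mono erec) auto
    have E3: "(\<Sum>t=2..m. a * cmod (e (Suc t)) + c) = a * (\<Sum>t=2..m. cmod (e (Suc t))) + real (m - 1) * c"
      by (simp add: sum.distrib sum_distrib_left)
    have E4: "(\<Sum>t=2..m. cmod (e (Suc t))) = (\<Sum>t=3..n. cmod (e t))"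
      using m sum.shift_bounds_cl_Suc_ivl[of "\<lambda>t. cmod (e t)" 2 m] by (simp add: numeral_3_eq_3 numeral_2_eq_2)
    have E5: "(\<Sum>t=3..n. cmod (e t)) \<le> E"
    proof -
      have "(\<Sum>t=2..n. cmod (e t)) = cmod (e 2) + (\<Sum>t=3..n. cmod (e t))"
        using n by (simp add: sum.atLeast_Suc_atMost numeral_3_eq_3 numeral_2_eq_2)
      then show ?thesis unfolding E_def by simp
    qed
    have E6: "a * (\<Sum>t=3..n. cmod (e t)) \<le> a * E" using E5 a by (simp add: mult_left_mono)
    have E7: "a * (\<Sum>t=2..m. cmod (e (Suc t))) \<le> a * E" using E6 E4 by simp
    have "E \<le> a * E + real (m - 1) * c + cmod (e n)" using E1 E2 E3 E7 by linarith
    moreover have "real (m - 1) * c \<le> real n * c" using m c0 by (intro mult_right_mono) auto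
    ultimately have "(1-a) * E \<le> real n * c + cmod (e n)" by (simp add: algebra_simps)
    then show ?thesis using en by linarith
  qed
  have zsum: "(\<Sum>t=2..n. z t) = complex_of_real a * S - z 1"
  proof -
    have A: "(\<Sum>t=1..m. z t) = \<i> * complex_of_real (\<Sum>t=1..m. u t) + complex_of_real a * (\<Sum>t=1..m. v (Suc t))"
      by (simp add: zrec m v_def sum.distrib sum_distrib_left)
    have Bv: "(\<Sum>t=1..m. v (Suc t)) = S" unfolding S_def
      using m sum.shift_bounds_cl_Suc_ivl[of v 1 m] by (simp add: numeral_2_eq_2)
    have C0: "(\<Sum>t=1..m. u t) = - u n" using usum m by simp
    have C: "(\<Sum>t=1..m. complex_of_real (u t)) = - complex_of_real (u n)"
      using C0 by (metis of_real_minus of_real_sum)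
    have D: "(\<Sum>t=1..n. z t) = z 1 + (\<Sum>t=2..n. z t)"
      using n by (simp add: sum.atLeast_Suc_atMost numeral_2_eq_2)
    have F: "(\<Sum>t=1..n. z t) = (\<Sum>t=1..m. z t) + z n" using m by simp
    show ?thesis using A Bv C0 D F zn by (simp add: algebra_simps del: of_real_sum)
  qed
  have Rdef: "S = (\<Sum>t=2..n. z t) + Q/2 + R"
    unfolding S_def Q_def R_def by (simp add: sum.distrib sum_subtractf sum_divide_distrib)
  have Rb: "cmod R \<le> real n * (2*B^3)"
  proof -
    have "cmod R \<le> (\<Sum>t=2..n. cmod (v t - z t - (z t)^2/2))" unfolding R_def by (rule norm_sum)
    also have "\<dots> \<le> (\<Sum>t=2..n. 2*B^3)"
    proof (intro sum_mono)
      fix t assume t: "t \<in> {2..n}"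
      then have zt: "cmod (z t) \<le> B" using zB by auto
      have "cmod (v t - z t - (z t)^2/2) \<le> 2 * cmod (z t)^3" unfolding v_def using T2 zt B1 by auto
      also have "\<dots> \<le> 2*B^3" using zt by (intro mult_left_mono power_mono) auto
      finally show "cmod (v t - z t - (z t)^2/2) \<le> 2*B^3" .
    qed
    also have "\<dots> \<le> real n * (2*B^3)" using B0 by (simp add: mult_right_mono)
    finally show ?thesis .
  qed
  have Qsv: "Qs = - complex_of_real ((s2 - (u 1)^2)/(1-a)^2)"
  proof -
    have "(\<Sum>t=2..n. (u t)^2) = s2 - (u 1)^2"
      using usq n by (simp add: sum.atLeast_Suc_atMost numeral_2_eq_2)
    moreover have "Qs = - complex_of_real ((\<Sum>t=2..n. (u t)^2)/(1-a)^2)"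
      unfolding Qs_def y_def by (simp add: power_mult_distrib sum_divide_distrib power_divide sum_negf)
    ultimately show ?thesis by simp
  qed
  have Qb: "cmod (Q - Qs) \<le> 2*B*E"
  proof -
    have "cmod (Q - Qs) \<le> (\<Sum>t=2..n. cmod ((z t)^2 - (y t)^2))"
      unfolding Q_def Qs_def sum_subtractf[symmetric] by (rule norm_sum)
    also have "\<dots> \<le> (\<Sum>t=2..n. cmod (e t) * (2*B))"
    proof (intro sum_mono)
      fix t assume t: "t \<in> {2..n}"
      have zt: "cmod (z t) \<le> B" using zB t by auto
      have yt: "cmod (y t) \<le> B"
      proof -
        have "cmod (y t) = \<bar>u t/(1-a)\<bar>" unfolding y_def by (rule ni)
        also have "\<dots> = \<bar>u t\<bar>/(1-a)" using a by simp
        also have "\<dots> \<le> U/(1-a)" using uU[of t] t a by (intro divide_right_mono) auto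
        finally show ?thesis using UB' by linarith
      qed
      have "(z t)^2 - (y t)^2 = e t * (z t + y t)" unfolding e_def by (simp add: power2_eq_square algebra_simps)
      then have "cmod ((z t)^2 - (y t)^2) = cmod (e t) * cmod (z t + y t)" by (simp add: norm_mult)
      also have "\<dots> \<le> cmod (e t) * (2*B)"
        using norm_triangle_ineq[of "z t" "y t"] zt yt by (intro mult_left_mono) auto
      finally show "cmod ((z t)^2 - (y t)^2) \<le> cmod (e t) * (2*B)" .
    qed
    also have "\<dots> = 2*B*E" unfolding E_def by (simp add: sum_distrib_right[symmetric] mult.commute)
    finally show ?thesis .
  qed
  define L where "L = complex_of_real (-s2/(2*(1-a)^3))"
  have ident: "complex_of_real (1-a) * (S - L) = - z 1 + R + (Q - Qs)/2 + complex_of_real ((u 1)^2/(2*(1-a)^2))"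
  proof -
    define W where "W = complex_of_real (s2/(2*(1-a)^2))"
    have h1: "complex_of_real (1-a) * S = - z 1 + Q/2 + R"
      using Rdef zsum by (simp add: algebra_simps)
    have h2: "complex_of_real (1-a) * L = - W"
    proof -
      have p3: "(1-a)^3 = (1-a)*(1-a)^2" by (simp add: power3_eq_cube power2_eq_square)
      have "(1-a)*(-s2/(2*(1-a)^3)) = -(s2/(2*(1-a)^2))" using a unfolding p3 by simp
      then show ?thesis unfolding L_def W_def by (metis of_real_mult of_real_minus)
    qed
    have h3: "Qs/2 = complex_of_real ((u 1)^2/(2*(1-a)^2)) - W"
    proof -
      have "-((s2 - (u 1)^2)/(1-a)^2)/2 = (u 1)^2/(2*(1-a)^2) - s2/(2*(1-a)^2)" using a by (simp add: field_simps)
      then have "complex_of_real (-((s2 - (u 1)^2)/(1-a)^2)/2) = complex_of_real ((u 1)^2/(2*(1-a)^2) - s2/(2*(1-a)^2))" by simp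
      then show ?thesis unfolding Qsv W_def by (metis of_real_diff of_real_divide of_real_minus of_real_numeral)
    qed
    have "complex_of_real (1-a) * (S - L) = complex_of_real (1-a) * S - complex_of_real (1-a) * L"
      by (simp add: right_diff_distrib)
    also have "\<dots> = - z 1 + Q/2 + R + W" unfolding h1 h2 by simp
    also have "\<dots> = - z 1 + R + (Q/2 - Qs/2) + complex_of_real ((u 1)^2/(2*(1-a)^2))"
      unfolding h3 by (simp add: algebra_simps)
    also have "Q/2 - Qs/2 = (Q - Qs)/2" by (simp add: diff_divide_distrib)
    finally show ?thesis .
  qed
  have tri4: "cmod (w1 + w2 + w3 + w4) \<le> cmod w1 + cmod w2 + cmod w3 + cmod w4" for w1 w2 w3 w4 :: complex
  proof -
    have "cmod (w1 + w2 + w3 + w4) \<le> cmod (w1 + w2 + w3) + cmod w4" by (rule norm_triangle_ineq)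
    moreover have "cmod (w1 + w2 + w3) \<le> cmod (w1 + w2) + cmod w3" by (rule norm_triangle_ineq)
    moreover have "cmod (w1 + w2) \<le> cmod w1 + cmod w2" by (rule norm_triangle_ineq)
    ultimately show ?thesis by linarith
  qed
  have u1: "(u 1)^2 \<le> U^2" using uU[of 1] n by (metis abs_ge_zero le_trans nat_1_add_1 numerals(1) one_le_numeral power2_abs power_mono)
  have "(1-a) * cmod (S - L) \<le> B + real n * (2*B^3) + B*E + U^2/(2*(1-a)^2)"
  proof -
    have "(1-a) * cmod (S - L) = cmod (complex_of_real (1-a) * (S - L))" using a by (simp only: norm_mult norm_of_real abs_of_pos[of "1-a"] diff_gt_0_iff_gt)
    also have "\<dots> \<le> cmod (- z 1) + cmod R + cmod ((Q - Qs)/2) + cmod (complex_of_real ((u 1)^2/(2*(1-a)^2)))"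
      unfolding ident by (rule tri4)
    also have "\<dots> = cmod (z 1) + cmod R + cmod (Q - Qs)/2 + (u 1)^2/(2*(1-a)^2)"
    proof -
      have "cmod (complex_of_real ((u 1)^2/(2*(1-a)^2))) = (u 1)^2/(2*(1-a)^2)"
        by (simp only: norm_of_real) simp
      moreover have "cmod ((Q - Qs)/2) = cmod (Q - Qs)/2" by (simp add: norm_divide)
      ultimately show ?thesis by simp
    qed
    also have "\<dots> \<le> B + real n * (2*B^3) + B*E + U^2/(2*(1-a)^2)"
    proof -
      have "cmod (z 1) \<le> B" using zB n by auto
      moreover have "(u 1)^2/(2*(1-a)^2) \<le> U^2/(2*(1-a)^2)" using u1 by (intro divide_right_mono) auto
      ultimately show ?thesis using Rb Qb by linarith
    qed
    finally show ?thesis .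
  qed
  moreover have "B*E \<le> B*((a*U/(1-a) + real n*c)/(1-a))"
  proof -
    have "E \<le> (a*U/(1-a) + real n*c)/(1-a)" using Ebound a by (subst pos_le_divide_eq) (auto simp: mult.commute)
    then show ?thesis using B0 by (rule mult_left_mono)
  qed
  moreover have "(1-a) * bnd a U d n = B + 2*real n*B^3 + B*((a*U/(1-a) + real n*c)/(1-a)) + U^2/(2*(1-a)^2)"
    unfolding bnd_def Let_def B_def[symmetric] c_def[symmetric] using a by simp
  ultimately have "(1-a) * cmod (S - L) \<le> (1-a) * bnd a U d n" by linarith
  then have "cmod (S - L) \<le> bnd a U d n" using a by (simp add: mult_le_cancel_left_pos)
  then show ?thesis unfolding S_def L_def v_def .
qed

lemma lim_f1: "(\<lambda>n::nat. ((real n - 1)/2)/sqrt(real n*((real n)^2-1)/12)) \<longlonglongrightarrow> 0"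
  by real_asymp
lemma lim_f2: "(\<lambda>n::nat. real n * (((real n - 1)/2)/sqrt(real n*((real n)^2-1)/12))^3) \<longlonglongrightarrow> 0"
  by real_asymp
lemma lim_f3: "(\<lambda>n::nat. real n * (((real n - 1)/2)/sqrt(real n*((real n)^2-1)/12)) * (1/sqrt(real n*((real n)^2-1)/12))) \<longlonglongrightarrow> 0"
  by real_asymp
lemma bnd_alt: assumes "a < 1" shows "bnd a U d n = (1/(1-a))*(2*(1/(1-a))*U + 16*(1/(1-a))^3*(real n*U^3) + 2*a*(1/(1-a))^3*U^2
   + 24*a*(1/(1-a))^4*(real n*U^3) + 2*a*(1/(1-a))^3*(real n*U*d) + (1/(1-a))^2*U^2/2)"
proof -
  define K where "K = 1/(1-a)"
  have e1: "x/(1-a) = x*K" for x unfolding K_def by simp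
  have e2: "x/(2*(1-a)^2) = x*K^2/2" for x unfolding K_def by (simp add: power_one_over)
  show ?thesis unfolding bnd_def Let_def e1 e2 K_def[symmetric]
    by (simp add: eval_nat_numeral algebra_simps)
qed


lemma sum_id_real: "(\<Sum>s=1..n. real s) = real n * (real n + 1) / 2"
proof (induction n)
  case 0 then show ?case by simp
next
  case (Suc n)
  have "(\<Sum>s=1..Suc n. real s) = (\<Sum>s=1..n. real s) + real (Suc n)" by simp
  also have "\<dots> = real n * (real n + 1) / 2 + real (Suc n)" using Suc by simp
  finally show ?case by (simp add: field_simps)
qed

lemma sum_sq_real: "(\<Sum>s=1..n. (real s)^2) = real n * (real n + 1) * (2 * real n + 1) / 6"
proof (induction n)
  case 0 then show ?case by simp
next
  case (Suc n)
  have "(\<Sum>s=1..Suc n. (real s)^2) = (\<Sum>s=1..n. (real s)^2) + (real (Suc n))^2" by simp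
  also have "\<dots> = real n * (real n + 1) * (2 * real n + 1) / 6 + (real (Suc n))^2" using Suc by simp
  finally show ?case by (simp add: field_simps power2_eq_square)
qed

definition Vn :: "nat \<Rightarrow> real" where "Vn n = real n * ((real n)^2 - 1) / 12"

lemma sum_centered: "(\<Sum>s=1..n. real s - (real n + 1) / 2) = 0"
proof -
  have "(\<Sum>s=1..n. real s - (real n + 1) / 2) = (\<Sum>s=1..n. real s) - real n * ((real n + 1) / 2)"
    by (simp add: sum_subtractf)
  then show ?thesis unfolding sum_id_real by simp
qed

lemma sum_centered_sq: "(\<Sum>s=1..n. (real s - (real n + 1) / 2)^2) = Vn n"
proof -
  have "(\<Sum>s=1..n. (real s - (real n + 1) / 2)^2)
      = (\<Sum>s=1..n. (real s)^2) - (real n + 1) * (\<Sum>s=1..n. real s) + real n * ((real n + 1) / 2)^2"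
  proof -
    have "(\<Sum>s=1..n. (real s - (real n + 1) / 2)^2) = (\<Sum>s=1..n. (real s)^2 - (real n + 1) * real s + ((real n + 1) / 2)^2)"
      by (intro sum.cong refl) (simp add: power2_diff algebra_simps)
    also have "\<dots> = (\<Sum>s=1..n. (real s)^2) - (real n + 1) * (\<Sum>s=1..n. real s) + real n * ((real n + 1) / 2)^2"
      by (simp add: sum.distrib sum_subtractf sum_distrib_left)
    finally show ?thesis .
  qed
  also have "\<dots> = Vn n" unfolding sum_sq_real sum_id_real Vn_def
    by (simp add: field_simps power2_eq_square)
  finally show ?thesis .
qed

lemma Vn_pos: "2 \<le> n \<Longrightarrow> 0 < Vn n"
proof -
  assume n: "2 \<le> n"
  then have "(real n)^2 > 1" by (metis less_1_mult numeral_le_real_of_nat_iff one_less_numeral_iff power2_eq_square semiring_norm(76) order_less_le_trans one_less_numeral_iff)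
  then show ?thesis unfolding Vn_def using n by auto
qed

lemma Vn_nonneg: "0 \<le> Vn n"
proof (cases "n = 0")
  case False
  then have "1 \<le> (real n)^2" by (simp add: one_le_power)
  then show ?thesis unfolding Vn_def by auto
qed (simp add: Vn_def)

lemma tw_eq: "trend_weight n t = (real t - (real n + 1) / 2) / sqrt (Vn n)"
  unfolding trend_weight_def sum_centered_sq ..

lemma tw_sum: "(\<Sum>t=1..n. trend_weight n t) = 0"
  unfolding tw_eq sum_divide_distrib[symmetric] sum_centered by simp

lemma tw_sq: "2 \<le> n \<Longrightarrow> (\<Sum>t=1..n. (trend_weight n t)^2) = 1"
proof -
  assume n: "2 \<le> n"
  have "(\<Sum>t=1..n. (trend_weight n t)^2) = (\<Sum>t=1..n. (real t - (real n + 1) / 2)^2) / Vn n"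
    unfolding tw_eq using Vn_pos[OF n] by (simp add: power_divide sum_divide_distrib)
  then show ?thesis using Vn_pos[OF n] unfolding sum_centered_sq by simp
qed

lemma tw_bound: "1 \<le> t \<Longrightarrow> t \<le> n \<Longrightarrow> \<bar>trend_weight n t\<bar> \<le> ((real n - 1)/2) / sqrt (Vn n)"
proof -
  assume t: "1 \<le> t" "t \<le> n"
  have "\<bar>trend_weight n t\<bar> = \<bar>real t - (real n + 1) / 2\<bar> / sqrt (Vn n)"
    unfolding tw_eq using Vn_nonneg[of n] by (simp add: abs_divide)
  also have "\<dots> \<le> ((real n - 1)/2) / sqrt (Vn n)"
  proof (intro divide_right_mono)
    have "1 \<le> real t" "real t \<le> real n" using t by auto
    then have h1: "real t - (real n + 1) / 2 \<le> (real n - 1)/2" by (simp add: field_simps)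
    have h2: "-(real t - (real n + 1) / 2) \<le> (real n - 1)/2" using \<open>1 \<le> real t\<close> by (simp add: field_simps)
    show "\<bar>real t - (real n + 1) / 2\<bar> \<le> (real n - 1)/2" using h1 h2 by (simp only: abs_le_iff)
  qed (simp add: Vn_nonneg)
  finally show ?thesis .
qed

lemma tw_diff: "trend_weight n (Suc t) - trend_weight n t = 1 / sqrt (Vn n)"
  unfolding tw_eq by (simp add: diff_divide_distrib[symmetric])

fun zback :: "real \<Rightarrow> (nat \<Rightarrow> real) \<Rightarrow> nat \<Rightarrow> nat \<Rightarrow> complex" where
  "zback a u n 0 = \<i> * complex_of_real (u n)"
| "zback a u n (Suc k) = \<i> * complex_of_real (u (n - Suc k)) + complex_of_real a * (exp (zback a u n k) - 1)"

lemma zback_Re: "0 \<le> a \<Longrightarrow> Re (zback a u n k) \<le> 0"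
proof (induction k)
  case 0 then show ?case by simp
next
  case (Suc k)
  have "Re (exp (zback a u n k)) \<le> exp (Re (zback a u n k))"
    using complex_Re_le_cmod[of "exp (zback a u n k)"] by (simp add: norm_exp_eq_Re)
  also have "\<dots> \<le> 1" using Suc by simp
  finally have "Re (exp (zback a u n k)) \<le> 1" .
  then show ?case using Suc by (simp add: mult_nonneg_nonpos)
qed

lemma zback_n: "zback a u n (n - n) = \<i> * complex_of_real (u n)" by simp

lemma zback_rec: "1 \<le> t \<Longrightarrow> t < n \<Longrightarrow> zback a u n (n - t) = \<i> * complex_of_real (u t) + complex_of_real a * (exp (zback a u n (n - Suc t)) - 1)"
proof -
  assume "1 \<le> t" "t < n"
  then have "n - t = Suc (n - Suc t)" "n - Suc (n - Suc t) = t" by auto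
  then show ?thesis by simp
qed



lemma normal_law_rd: "0 \<le> v \<Longrightarrow> real_distribution (normal_law v)"
proof (cases "v = 0")
  case True
  then show ?thesis unfolding normal_law_def real_distribution_def real_distribution_axioms_def
    by (auto intro: prob_space_return)
next
  case False
  assume "0 \<le> v"
  then have "0 < sqrt v" using False by simp
  then show ?thesis unfolding normal_law_def real_distribution_def real_distribution_axioms_def
    using False by (auto intro: prob_space_normal_density)
qed

lemma char_normal_law: assumes v: "0 \<le> v" shows "char (normal_law v) s = complex_of_real (exp (- (v * s^2) / 2))"
proof (cases "v = 0")
  case True
  then show ?thesis unfolding normal_law_def char_def by (simp add: integral_return)
next
  case False
  define \<sigma> where "\<sigma> = sqrt v"
  have sp: "0 < \<sigma>" using v False unfolding \<sigma>_def by simp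
  interpret N: prob_space std_normal_distribution by (rule prob_space_normal_density) simp
  have d0: "distributed std_normal_distribution lborel (\<lambda>x. x) std_normal_density"
    unfolding distributed_def by (auto simp: distr_id2)
  have "distributed std_normal_distribution lborel (\<lambda>x. 0 + \<sigma> * x) (normal_density (0 + \<sigma> * 0) (\<bar>\<sigma>\<bar> * 1))"
    by (rule N.normal_density_affine[OF d0]) (use sp in auto)
  then have "distr std_normal_distribution lborel (\<lambda>x. \<sigma> * x) = density lborel (normal_density 0 \<sigma>)"
    using sp unfolding distributed_def by simp
  then have eq: "normal_law v = distr std_normal_distribution lborel (\<lambda>x. \<sigma> * x)"
    unfolding normal_law_def \<sigma>_def using False by simp
  have "char (normal_law v) s = (CLINT x|std_normal_distribution. iexp (s * (\<sigma> * x)))"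
    unfolding eq char_def by (subst integral_distr) auto
  also have "\<dots> = char std_normal_distribution (s * \<sigma>)"
    unfolding char_def by (simp add: mult.assoc)
  also have "\<dots> = complex_of_real (exp (- ((s * \<sigma>)^2) / 2))"
    by (simp add: char_std_normal_distribution)
  also have "(s * \<sigma>)^2 = v * s^2" unfolding \<sigma>_def using v by (simp add: power_mult_distrib)
  finally show ?thesis .
qed



lemma pois_prob_eq: "0 \<le> r \<Longrightarrow> pois_prob r k = r ^ k / fact k * exp (-r)"
  unfolding pois_prob_def by (cases "r = 0") (auto simp: pmf_poisson)

locale inarch = prob_space M for M :: "'a measure" +
  fixes Y :: "int \<Rightarrow> 'a \<Rightarrow> nat" and lam :: "int \<Rightarrow> 'a \<Rightarrow> real" and a b0 :: real
  assumes a_pos: "0 < a" and a_lt1: "a < 1" and b0: "0 \<le> b0"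
    and meas: "\<And>t. Y t \<in> measurable M (count_space UNIV)"
    and lam_def: "\<And>t x. x \<in> space M \<Longrightarrow> lam t x = a * real (Y (t - 1) x) + b0"
    and cond_pois: "\<And>t k. AE x in M.
          real_cond_exp M (past M Y lam t) (indicator {x \<in> space M. Y t x = k}) x
            = pois_prob (lam t x) k"
begin

definition gen :: "int \<Rightarrow> 'a set set" where
  "gen t = (\<Union>s\<in>{..<t}. {Y s -` A \<inter> space M | A. True} \<union> {lam s -` B \<inter> space M | B. B \<in> sets borel})"

lemma past_eq: "past M Y lam t = sigma (space M) (gen t)"
  unfolding past_def gen_def ..

lemma gen_Pow: "gen t \<subseteq> Pow (space M)"
  unfolding gen_def by auto

lemma lam_meas: "lam s \<in> borel_measurable M"
proof -
  have "(\<lambda>x. a * real (Y (s - 1) x) + b0) \<in> borel_measurable M"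
    using measurable_compose[OF meas[of "s-1"], of "\<lambda>n. a * real n + b0" borel] by simp
  then show ?thesis using measurable_cong[of M "lam s" "\<lambda>x. a * real (Y (s - 1) x) + b0"] lam_def by simp
qed

lemma gen_sets: "gen t \<subseteq> sets M"
proof -
  { fix s A have "Y s -` A \<inter> space M \<in> sets M" using measurable_sets[OF meas[of s], of A] by simp }
  moreover
  { fix s and B :: "real set" assume "B \<in> sets borel" then have "lam s -` B \<inter> space M \<in> sets M"
      using measurable_sets[OF lam_meas[of s]] by simp }
  ultimately show ?thesis unfolding gen_def by blast
qed

lemma space_past[simp]: "space (past M Y lam t) = space M"
  unfolding past_eq using gen_Pow by (simp add: space_measure_of)

lemma sets_past: "sets (past M Y lam t) = sigma_sets (space M) (gen t)"
  unfolding past_eq using gen_Pow by (simp add: sets_measure_of)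

lemma subalg_past: "subalgebra M (past M Y lam t)"
  unfolding subalgebra_def using sets.sigma_sets_subset[OF gen_sets[of t]] by (simp add: sets_past)

lemma sfs_past: "sigma_finite_subalgebra M (past M Y lam t)"
proof -
  interpret finite_measure_subalgebra M "past M Y lam t"
    by unfold_locales (rule subalg_past)
  show ?thesis by (rule finite_measure_subalgebra_is_sigma_finite) unfold_locales
qed

lemma Y_meas_past: "s < t \<Longrightarrow> Y s \<in> measurable (past M Y lam t) (count_space UNIV)"
proof (rule measurableI)
  fix A assume "s < t"
  then have "Y s -` A \<inter> space M \<in> gen t" unfolding gen_def by blast
  then show "Y s -` A \<inter> space (past M Y lam t) \<in> sets (past M Y lam t)"
    by (simp add: sets_past)
qed auto

lemma Y_real_meas_past: "s < t \<Longrightarrow> (\<lambda>x. f (Y s x)) \<in> borel_measurable (past M Y lam t)"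
  using measurable_compose[OF Y_meas_past, of s t f borel] by simp

lemma Y_fun_meas: "(\<lambda>x. f (Y s x)) \<in> borel_measurable M"
  using measurable_compose[OF meas[of s], of f borel] by simp


lemmas meas_M[measurable] = meas

definition P :: "int \<Rightarrow> nat \<Rightarrow> 'a \<Rightarrow> real" where
  "P t k x = pois_prob (a * real (Y (t - 1) x) + b0) k"

lemma P_meas[measurable]: "P t k \<in> borel_measurable M"
  unfolding P_def by (rule Y_fun_meas)

lemma P_eq: "P t k x = (a * real (Y (t - 1) x) + b0) ^ k / fact k * exp (- (a * real (Y (t - 1) x) + b0))"
  unfolding P_def using a_pos b0 by (intro pois_prob_eq) auto

lemma P_nonneg: "0 \<le> P t k x"
  unfolding P_eq using a_pos b0 by auto

lemma cond_ind:
  assumes f: "f \<in> borel_measurable (past M Y lam t)" and fb: "\<And>x. x \<in> space M \<Longrightarrow> \<bar>f x\<bar> \<le> K"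
  shows "(\<integral>x. f x * indicator {x \<in> space M. Y t x = k} x \<partial>M) = (\<integral>x. f x * P t k x \<partial>M)"
proof -
  interpret S: sigma_finite_subalgebra M "past M Y lam t" by (rule sfs_past)
  have fM[measurable]: "f \<in> borel_measurable M" using measurable_from_subalg[OF subalg_past f] .
  have gM: "(indicator {x \<in> space M. Y t x = k} :: 'a \<Rightarrow> real) \<in> borel_measurable M" by measurable
  obtain x0 where "x0 \<in> space M" using not_empty by blast
  then have K0: "0 \<le> K" using fb[of x0] by linarith
  have int: "integrable M (\<lambda>x. f x * indicator {x \<in> space M. Y t x = k} x)"
    by (rule integrable_const_bound[where B=K]) (auto simp: fb indicator_def K0)
  have "(\<integral>x. f x * indicator {x \<in> space M. Y t x = k} x \<partial>M)
      = (\<integral>x. f x * real_cond_exp M (past M Y lam t) (indicator {x \<in> space M. Y t x = k}) x \<partial>M)"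
    using S.real_cond_exp_intg(2)[OF int f gM] by simp
  also have "\<dots> = (\<integral>x. f x * P t k x \<partial>M)"
  proof (rule integral_cong_AE)
    show "(\<lambda>x. f x * real_cond_exp M (past M Y lam t) (indicator {x \<in> space M. Y t x = k}) x) \<in> borel_measurable M"
      by measurable
    show "(\<lambda>x. f x * P t k x) \<in> borel_measurable M" by measurable
    show "AE x in M. f x * real_cond_exp M (past M Y lam t) (indicator {x \<in> space M. Y t x = k}) x = f x * P t k x"
      using cond_pois[of t k] AE_space
    proof eventually_elim
      case (elim x)
      then show ?case using lam_def[of x t] by (simp add: P_def)
    qed
  qed
  finally show ?thesis .
qed

lemma cond_ind_c:
  fixes g :: "'a \<Rightarrow> complex"
  assumes g: "g \<in> borel_measurable (past M Y lam t)" and gb: "\<And>x. x \<in> space M \<Longrightarrow> cmod (g x) \<le> 1"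
  shows "(\<integral>x. g x * of_real (indicator {x \<in> space M. Y t x = k} x) \<partial>M) = (\<integral>x. g x * of_real (P t k x) \<partial>M)"
proof -
  have gM[measurable]: "g \<in> borel_measurable M" using measurable_from_subalg[OF subalg_past g] .
  have gR: "(\<lambda>x. Re (g x)) \<in> borel_measurable (past M Y lam t)" using g by measurable
  have gI: "(\<lambda>x. Im (g x)) \<in> borel_measurable (past M Y lam t)" using g by measurable
  have bR: "\<bar>Re (g x)\<bar> \<le> 1" if "x \<in> space M" for x using gb[OF that] abs_Re_le_cmod order_trans by blast
  have bI: "\<bar>Im (g x)\<bar> \<le> 1" if "x \<in> space M" for x using gb[OF that] abs_Im_le_cmod order_trans by blast
  have P1: "P t k x \<le> 1" for x
  proof -
    define r where "r = a * real (Y (t - 1) x) + b0"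
    have r0: "0 \<le> r" unfolding r_def using a_pos b0 by auto
    have "r ^ k / fact k \<le> (\<Sum>n. r ^ n /\<^sub>R fact n)"
    proof -
      have "(\<Sum>n\<in>{k}. r ^ n /\<^sub>R fact n) \<le> (\<Sum>n. r ^ n /\<^sub>R fact n)"
        by (rule sum_le_suminf) (use exp_converges[of r] r0 in \<open>auto simp: sums_summable\<close>)
      then show ?thesis by (simp add: divide_inverse_commute)
    qed
    also have "\<dots> = exp r" using exp_converges[of r] sums_unique by metis
    finally have "r ^ k / fact k * exp (-r) \<le> exp r * exp (-r)" by (intro mult_right_mono) auto
    then show ?thesis unfolding P_eq r_def[symmetric] by (simp add: exp_minus)
  qed
  have ind_int: "integrable M (\<lambda>x. g x * of_real (indicator {x \<in> space M. Y t x = k} x))"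
    by (rule integrable_const_bound[where B=1]) (auto simp: gb indicator_def norm_mult)
  have P_int: "integrable M (\<lambda>x. g x * of_real (P t k x))"
    by (rule integrable_const_bound[where B=1]) (auto simp: norm_mult P_nonneg intro!: mult_le_one gb P1)
  show ?thesis
  proof (rule complex_eqI)
    show "Re (\<integral>x. g x * of_real (indicator {x \<in> space M. Y t x = k} x) \<partial>M) = Re (\<integral>x. g x * of_real (P t k x) \<partial>M)"
      using cond_ind[OF gR bR, of k] by (simp add: integral_Re[OF ind_int, symmetric] integral_Re[OF P_int, symmetric])
    show "Im (\<integral>x. g x * of_real (indicator {x \<in> space M. Y t x = k} x) \<partial>M) = Im (\<integral>x. g x * of_real (P t k x) \<partial>M)"
      using cond_ind[OF gI bI, of k] by (simp add: integral_Im[OF ind_int, symmetric] integral_Im[OF P_int, symmetric])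
  qed
qed


lemma norm_exp_nat_le1: fixes z :: complex assumes "Re z \<le> 0" shows "cmod (exp (z * of_nat k)) \<le> 1"
proof -
  have "Re (z * of_nat k) \<le> 0" using assms by (simp add: mult_nonpos_nonneg)
  then show ?thesis by (simp add: norm_exp_eq_Re)
qed

lemma partial_exp_le: fixes r :: real assumes "0 \<le> r" shows "(\<Sum>k<N. r ^ k / fact k) \<le> exp r"
proof -
  have "(\<Sum>n\<in>{..<N}. r ^ n /\<^sub>R fact n) \<le> (\<Sum>n. r ^ n /\<^sub>R fact n)"
    by (rule sum_le_suminf) (use exp_converges[of r] assms in \<open>auto simp: sums_summable\<close>)
  also have "\<dots> = exp r" using exp_converges[of r] sums_unique by metis
  finally show ?thesis by (simp add: divide_inverse_commute)
qed

lemma cond_exp_step: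
  fixes g :: "'a \<Rightarrow> complex" and z :: complex
  assumes g: "g \<in> borel_measurable (past M Y lam t)" and gb: "\<And>x. x \<in> space M \<Longrightarrow> cmod (g x) \<le> 1"
    and z: "Re z \<le> 0"
  shows "(\<integral>x. g x * exp (z * of_nat (Y t x)) \<partial>M)
       = (\<integral>x. g x * exp (complex_of_real (a * real (Y (t-1) x) + b0) * (exp z - 1)) \<partial>M)"
proof -
  have gM[measurable]: "g \<in> borel_measurable M" using measurable_from_subalg[OF subalg_past g] .
  define sN where "sN N x = (\<Sum>k<N. g x * exp (z * of_nat k) * of_real (indicator {x \<in> space M. Y t x = k} x))" for N x
  define rN where "rN N x = (\<Sum>k<N. g x * exp (z * of_nat k) * of_real (P t k x))" for N x
  define lamx where "lamx x = a * real (Y (t-1) x) + b0" for x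
  have lam0: "0 \<le> lamx x" for x unfolding lamx_def using a_pos b0 by auto
  have ez: "cmod (exp (z * of_nat k)) \<le> 1" for k by (rule norm_exp_nat_le1[OF z])
  have ind_meas[measurable]: "(\<lambda>x. indicator {x \<in> space M. Y t x = k} x :: real) \<in> borel_measurable M" for k
    by measurable
  have eY[measurable]: "(\<lambda>x. exp (z * of_nat (Y t x))) \<in> borel_measurable M"
    by (rule Y_fun_meas)
  have eL[measurable]: "(\<lambda>x. exp (complex_of_real (a * real (Y (t-1) x) + b0) * (exp z - 1))) \<in> borel_measurable M"
    by (rule Y_fun_meas)
  have sN_meas[measurable]: "sN N \<in> borel_measurable M" for N unfolding sN_def by measurable
  have rN_meas[measurable]: "rN N \<in> borel_measurable M" for N unfolding rN_def by measurable
  have eqN: "integral\<^sup>L M (sN N) = integral\<^sup>L M (rN N)" for N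
  proof -
    have i1: "integrable M (\<lambda>x. g x * exp (z * of_nat k) * of_real (indicator {x \<in> space M. Y t x = k} x))" for k
    proof (rule integrable_const_bound[where B=1])
      show "AE x in M. cmod (g x * exp (z * of_nat k) * of_real (indicator {x \<in> space M. Y t x = k} x)) \<le> 1"
      proof (rule AE_I2)
        fix x assume x: "x \<in> space M"
        have "cmod (of_real (indicator {x \<in> space M. Y t x = k} x :: real)) \<le> 1" by (simp add: indicator_def)
        then show "cmod (g x * exp (z * of_nat k) * of_real (indicator {x \<in> space M. Y t x = k} x)) \<le> 1"
          unfolding norm_mult by (intro mult_le_one gb x ez) auto
      qed
    qed measurable
    have i2: "integrable M (\<lambda>x. g x * exp (z * of_nat k) * of_real (P t k x))" for k
    proof (rule integrable_const_bound[where B=1])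
      show "AE x in M. cmod (g x * exp (z * of_nat k) * of_real (P t k x)) \<le> 1"
      proof (rule AE_I2)
        fix x assume x: "x \<in> space M"
        have "P t k x \<le> 1"
        proof -
          have "P t k x \<le> (\<Sum>j<Suc k. lamx x ^ j / fact j) * exp (- lamx x)"
            unfolding P_eq lamx_def[symmetric]
            by (intro mult_right_mono member_le_sum) (auto intro!: divide_nonneg_nonneg zero_le_power lam0)
          also have "\<dots> \<le> exp (lamx x) * exp (- lamx x)"
            by (intro mult_right_mono partial_exp_le lam0) auto
          finally show ?thesis by (simp add: exp_minus)
        qed
        then have "cmod (of_real (P t k x)) \<le> 1" using P_nonneg[of t k x] by simp
        then show "cmod (g x * exp (z * of_nat k) * of_real (P t k x)) \<le> 1"
          unfolding norm_mult by (intro mult_le_one gb x ez) auto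
      qed
    qed measurable
    have "integral\<^sup>L M (sN N) = (\<Sum>k<N. \<integral>x. g x * exp (z * of_nat k) * of_real (indicator {x \<in> space M. Y t x = k} x) \<partial>M)"
      unfolding sN_def by (rule Bochner_Integration.integral_sum[where f="\<lambda>k x. g x * exp (z * of_nat k) * of_real (indicator {x \<in> space M. Y t x = k} x)"]) (rule i1)
    also have "\<dots> = (\<Sum>k<N. exp (z * of_nat k) * (\<integral>x. g x * of_real (indicator {x \<in> space M. Y t x = k} x) \<partial>M))"
      by (intro sum.cong refl) (simp add: integral_mult_right_zero[symmetric] mult.assoc mult.left_commute)
    also have "\<dots> = (\<Sum>k<N. exp (z * of_nat k) * (\<integral>x. g x * of_real (P t k x) \<partial>M))"
      using cond_ind_c[OF g gb] by simp
    also have "\<dots> = (\<Sum>k<N. \<integral>x. g x * exp (z * of_nat k) * of_real (P t k x) \<partial>M)"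
      by (intro sum.cong refl) (simp add: integral_mult_right_zero[symmetric] mult.assoc mult.left_commute)
    also have "\<dots> = integral\<^sup>L M (rN N)"
      unfolding rN_def by (rule Bochner_Integration.integral_sum[where f="\<lambda>k x. g x * exp (z * of_nat k) * of_real (P t k x)", symmetric]) (rule i2)
    finally show ?thesis .
  qed
  have sN_eq: "sN N x = (if Y t x < N then g x * exp (z * of_nat (Y t x)) else 0)" if x: "x \<in> space M" for N x
  proof -
    have "sN N x = (\<Sum>k<N. if Y t x = k then g x * exp (z * of_nat k) else 0)"
      unfolding sN_def using x by (intro sum.cong) (auto simp: indicator_def)
    also have "\<dots> = (if Y t x < N then g x * exp (z * of_nat (Y t x)) else 0)"
      by (simp add: sum.delta')
    finally show ?thesis .
  qed
  have lim1: "(\<lambda>N. integral\<^sup>L M (sN N)) \<longlonglongrightarrow> (\<integral>x. g x * exp (z * of_nat (Y t x)) \<partial>M)"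
  proof (rule integral_dominated_convergence[where w="\<lambda>_. 1"])
    show "(\<lambda>x. g x * exp (z * of_nat (Y t x))) \<in> borel_measurable M" by measurable
    show "\<And>i. sN i \<in> borel_measurable M" by measurable
    show "integrable M (\<lambda>_. 1::real)" by simp
    show "AE x in M. (\<lambda>i. sN i x) \<longlonglongrightarrow> g x * exp (z * of_nat (Y t x))"
    proof (rule AE_I2)
      fix x assume x: "x \<in> space M"
      show "(\<lambda>i. sN i x) \<longlonglongrightarrow> g x * exp (z * of_nat (Y t x))"
        by (rule tendsto_eventually, rule eventually_sequentiallyI[of "Suc (Y t x)"]) (simp add: sN_eq[OF x])
    qed
    show "\<And>i. AE x in M. norm (sN i x) \<le> 1"
    proof (rule AE_I2)
      fix i x assume x: "x \<in> space M"
      have "cmod (g x * exp (z * of_nat (Y t x))) \<le> 1"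
        unfolding norm_mult by (intro mult_le_one gb x ez) auto
      then show "norm (sN i x) \<le> 1" by (simp add: sN_eq[OF x])
    qed
  qed
  have rN_eq: "rN N x = g x * of_real (exp (- lamx x)) * (\<Sum>k<N. (of_real (lamx x) * exp z)^k /\<^sub>R fact k)" for N x
  proof -
    have "g x * exp (z * of_nat k) * of_real (P t k x) = g x * of_real (exp (- lamx x)) * ((of_real (lamx x) * exp z)^k /\<^sub>R fact k)" for k
    proof -
      have "exp (z * of_nat k) = exp z ^ k" by (metis exp_of_nat_mult mult.commute)
      then show ?thesis unfolding P_eq lamx_def[symmetric]
        by (simp add: power_mult_distrib scaleR_conv_of_real field_simps)
    qed
    then show ?thesis unfolding rN_def by (simp add: sum_distrib_left)
  qed
  have lim2: "(\<lambda>N. integral\<^sup>L M (rN N)) \<longlonglongrightarrow> (\<integral>x. g x * exp (complex_of_real (a * real (Y (t-1) x) + b0) * (exp z - 1)) \<partial>M)"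
  proof (rule integral_dominated_convergence[where w="\<lambda>_. 1"])
    show "(\<lambda>x. g x * exp (complex_of_real (a * real (Y (t-1) x) + b0) * (exp z - 1))) \<in> borel_measurable M" by measurable
    show "\<And>i. rN i \<in> borel_measurable M" by measurable
    show "integrable M (\<lambda>_. 1::real)" by simp
    show "AE x in M. (\<lambda>i. rN i x) \<longlonglongrightarrow> g x * exp (complex_of_real (a * real (Y (t-1) x) + b0) * (exp z - 1))"
    proof (rule AE_I2)
      fix x assume x: "x \<in> space M"
      have "(\<lambda>N. \<Sum>k<N. (of_real (lamx x) * exp z)^k /\<^sub>R fact k) \<longlonglongrightarrow> exp (of_real (lamx x) * exp z)"
        using exp_converges[of "of_real (lamx x) * exp z"] unfolding sums_def .
      then have "(\<lambda>N. rN N x) \<longlonglongrightarrow> g x * of_real (exp (- lamx x)) * exp (of_real (lamx x) * exp z)"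
        unfolding rN_eq by (intro tendsto_mult_left)
      moreover have "g x * of_real (exp (- lamx x)) * exp (of_real (lamx x) * exp z)
          = g x * exp (complex_of_real (a * real (Y (t-1) x) + b0) * (exp z - 1))"
      proof -
        have "complex_of_real (exp (- lamx x)) * exp (of_real (lamx x) * exp z) = exp (of_real (lamx x) * (exp z - 1))"
          by (simp add: exp_of_real[symmetric] exp_add[symmetric] algebra_simps)
        then show ?thesis unfolding lamx_def by (simp add: mult.assoc)
      qed
      ultimately show "(\<lambda>i. rN i x) \<longlonglongrightarrow> g x * exp (complex_of_real (a * real (Y (t-1) x) + b0) * (exp z - 1))"
        by simp
    qed
    show "\<And>i. AE x in M. norm (rN i x) \<le> 1"
    proof (rule AE_I2)
      fix i x assume x: "x \<in> space M"
      have "norm (rN i x) \<le> (\<Sum>k<i. cmod (g x * exp (z * of_nat k) * of_real (P t k x)))"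
        unfolding rN_def by (rule norm_sum)
      also have "\<dots> \<le> (\<Sum>k<i. P t k x)"
      proof (intro sum_mono)
        fix k
        have "cmod (g x * exp (z * of_nat k) * of_real (P t k x)) = cmod (g x) * cmod (exp (z * of_nat k)) * P t k x"
          using P_nonneg[of t k x] by (simp add: norm_mult)
        also have "\<dots> \<le> 1 * 1 * P t k x"
          by (intro mult_right_mono mult_mono gb x ez P_nonneg) auto
        finally show "cmod (g x * exp (z * of_nat k) * of_real (P t k x)) \<le> P t k x" by simp
      qed
      also have "\<dots> = (\<Sum>k<i. lamx x ^ k / fact k) * exp (- lamx x)"
        unfolding P_eq lamx_def[symmetric] by (simp add: sum_distrib_right)
      also have "\<dots> \<le> exp (lamx x) * exp (- lamx x)"
        by (intro mult_right_mono partial_exp_le lam0) auto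
      also have "\<dots> = 1" by (simp add: exp_minus)
      finally show "norm (rN i x) \<le> 1" .
    qed
  qed
  show ?thesis using LIMSEQ_unique[OF lim1[unfolded eqN] lim2] .
qed


lemma phi_meas:
  "(\<lambda>x. exp (\<Sum>t\<in>{1..<m}. \<i> * complex_of_real (u t) * of_nat (Y (int t) x))) \<in> borel_measurable (past M Y lam (int m))"
proof -
  have "(\<lambda>x. \<Sum>t\<in>{1..<m}. \<i> * complex_of_real (u t) * of_nat (Y (int t) x)) \<in> borel_measurable (past M Y lam (int m))"
  proof (rule borel_measurable_sum)
    fix t assume "t \<in> {1..<m}"
    then have "int t < int m" by auto
    then show "(\<lambda>x. \<i> * complex_of_real (u t) * of_nat (Y (int t) x)) \<in> borel_measurable (past M Y lam (int m))"
      by (rule Y_real_meas_past)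
  qed
  then show ?thesis by measurable
qed

lemma phi_norm: "cmod (exp (\<Sum>t\<in>A. \<i> * complex_of_real (u t) * of_nat (Y (int t) x))) = 1"
  by (simp add: norm_exp_eq_Re Re_sum)

lemma char_formula:
  fixes u :: "nat \<Rightarrow> real" and z :: "nat \<Rightarrow> complex" and n :: nat
  assumes n: "1 \<le> n" and zRe: "\<And>t. 1 \<le> t \<Longrightarrow> t \<le> n \<Longrightarrow> Re (z t) \<le> 0"
    and zn: "z n = \<i> * complex_of_real (u n)"
    and zrec: "\<And>t. 1 \<le> t \<Longrightarrow> t < n \<Longrightarrow> z t = \<i> * complex_of_real (u t) + complex_of_real a * (exp (z (Suc t)) - 1)"
  shows "(\<integral>x. exp (\<Sum>t=1..n. \<i> * complex_of_real (u t) * of_nat (Y (int t) x)) \<partial>M)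
       = (\<integral>x. exp (z 1 * of_nat (Y 1 x)) \<partial>M) * exp (complex_of_real b0 * (\<Sum>t=2..n. exp (z t) - 1))"
proof -
  define phi where "phi m x = (\<Sum>t\<in>{1..<m}. \<i> * complex_of_real (u t) * of_nat (Y (int t) x))" for m x
  define LHS where "LHS = (\<integral>x. exp (\<Sum>t=1..n. \<i> * complex_of_real (u t) * of_nat (Y (int t) x)) \<partial>M)"
  have main: "\<forall>j. j \<le> n - 1 \<longrightarrow> LHS = (\<integral>x. exp (phi (n - j) x + z (n - j) * of_nat (Y (int (n - j)) x)) \<partial>M)
        * exp (complex_of_real b0 * (\<Sum>t\<in>{Suc (n - j)..n}. exp (z t) - 1))"
  proof
    fix j show "j \<le> n - 1 \<longrightarrow> LHS = (\<integral>x. exp (phi (n - j) x + z (n - j) * of_nat (Y (int (n - j)) x)) \<partial>M)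
        * exp (complex_of_real b0 * (\<Sum>t\<in>{Suc (n - j)..n}. exp (z t) - 1))"
    proof (induction j)
      case 0
      have "(\<Sum>t=1..n. \<i> * complex_of_real (u t) * of_nat (Y (int t) x)) = phi n x + z n * of_nat (Y (int n) x)" for x
        unfolding phi_def zn using n by (simp add: atLeastLessThanSuc_atLeastAtMost[symmetric] sum.atLeastLessThan_Suc Suc_le_eq)
      then show ?case unfolding LHS_def by simp
    next
      case (Suc j)
      show ?case
      proof
        assume j: "Suc j \<le> n - 1"
        define m where "m = n - j"
        have m: "2 \<le> m" "m \<le> n" "n - Suc j = m - 1" using j n unfolding m_def by auto
        have IH: "LHS = (\<integral>x. exp (phi m x + z m * of_nat (Y (int m) x)) \<partial>M)
          * exp (complex_of_real b0 * (\<Sum>t\<in>{Suc m..n}. exp (z t) - 1))"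
          using Suc j unfolding m_def by auto
        have step1: "(\<integral>x. exp (phi m x + z m * of_nat (Y (int m) x)) \<partial>M)
            = (\<integral>x. exp (phi m x) * exp (complex_of_real (a * real (Y (int m - 1) x) + b0) * (exp (z m) - 1)) \<partial>M)"
        proof -
          have "(\<integral>x. exp (phi m x + z m * of_nat (Y (int m) x)) \<partial>M) = (\<integral>x. exp (phi m x) * exp (z m * of_nat (Y (int m) x)) \<partial>M)"
            by (simp add: exp_add)
          also have "\<dots> = (\<integral>x. exp (phi m x) * exp (complex_of_real (a * real (Y (int m - 1) x) + b0) * (exp (z m) - 1)) \<partial>M)"
            by (rule cond_exp_step) (use phi_meas[of u m] phi_norm zRe[of m] m in \<open>auto simp: phi_def\<close>)
          finally show ?thesis .
        qed
        have pm: "phi m x = phi (m - 1) x + \<i> * complex_of_real (u (m - 1)) * of_nat (Y (int (m - 1)) x)" for x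
        proof -
          have "m = Suc (m - 1)" using m by simp
          then show ?thesis unfolding phi_def using m
            by (metis (no_types, lifting) One_nat_def Suc_le_mono numeral_2_eq_2 sum.atLeastLessThan_Suc)
        qed
        have zm1: "z (m - 1) = \<i> * complex_of_real (u (m - 1)) + complex_of_real a * (exp (z m) - 1)"
          using zrec[of "m - 1"] m by (simp add: Suc_diff_1)
        have Yi: "Y (int m - 1) = Y (int (m - 1))" using m by (simp add: of_nat_diff)
        have step2: "exp (phi m x) * exp (complex_of_real (a * real (Y (int m - 1) x) + b0) * (exp (z m) - 1))
            = exp (phi (m - 1) x + z (m - 1) * of_nat (Y (int (m - 1)) x)) * exp (complex_of_real b0 * (exp (z m) - 1))" for x
          unfolding pm zm1 Yi by (simp add: exp_add[symmetric] algebra_simps)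
        have step3: "exp (complex_of_real b0 * (exp (z m) - 1)) * exp (complex_of_real b0 * (\<Sum>t\<in>{Suc m..n}. exp (z t) - 1))
            = exp (complex_of_real b0 * (\<Sum>t\<in>{m..n}. exp (z t) - 1))"
          using m by (simp add: exp_add[symmetric] sum.atLeast_Suc_atMost algebra_simps)
        have "LHS = (\<integral>x. exp (phi (m - 1) x + z (m - 1) * of_nat (Y (int (m - 1)) x)) \<partial>M)
          * exp (complex_of_real b0 * (exp (z m) - 1)) * exp (complex_of_real b0 * (\<Sum>t\<in>{Suc m..n}. exp (z t) - 1))"
          unfolding IH step1 step2 by simp
        also have "\<dots> = (\<integral>x. exp (phi (m - 1) x + z (m - 1) * of_nat (Y (int (m - 1)) x)) \<partial>M)
          * exp (complex_of_real b0 * (\<Sum>t\<in>{m..n}. exp (z t) - 1))"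
          unfolding step3[symmetric] by (simp add: mult.assoc)
        finally show "LHS = (\<integral>x. exp (phi (n - Suc j) x + z (n - Suc j) * of_nat (Y (int (n - Suc j)) x)) \<partial>M)
          * exp (complex_of_real b0 * (\<Sum>t\<in>{Suc (n - Suc j)..n}. exp (z t) - 1))"
          using m by (simp add: Suc_diff_1)
      qed
    qed
  qed
  from main[rule_format, of "n - 1"] have "LHS = (\<integral>x. exp (phi 1 x + z 1 * of_nat (Y (int 1) x)) \<partial>M)
        * exp (complex_of_real b0 * (\<Sum>t\<in>{2..n}. exp (z t) - 1))"
    using n by (simp add: numeral_2_eq_2)
  then show ?thesis unfolding LHS_def phi_def by simp
qed


lemma char_theta:
  "char (distr M borel (\<lambda>x. \<Sum>t=1..n. trend_weight n t * real (Y (int t) x))) s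
   = (\<integral>x. exp (\<Sum>t=1..n. \<i> * complex_of_real (s * trend_weight n t) * of_nat (Y (int t) x)) \<partial>M)"
proof -
  have m: "(\<lambda>x. \<Sum>t=1..n. trend_weight n t * real (Y (int t) x)) \<in> borel_measurable M"
    by (intro borel_measurable_sum) (rule Y_fun_meas)
  have "char (distr M borel (\<lambda>x. \<Sum>t=1..n. trend_weight n t * real (Y (int t) x))) s
      = (\<integral>x. iexp (s * (\<Sum>t=1..n. trend_weight n t * real (Y (int t) x))) \<partial>M)"
    unfolding char_def by (subst integral_distr[OF m]) auto
  also have "\<dots> = (\<integral>x. exp (\<Sum>t=1..n. \<i> * complex_of_real (s * trend_weight n t) * of_nat (Y (int t) x)) \<partial>M)"
    by (intro Bochner_Integration.integral_cong refl)
       (simp add: sum_distrib_left algebra_simps)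
  finally show ?thesis .
qed

lemma char_conv:
  "(\<lambda>n. char (distr M borel (\<lambda>x. \<Sum>t=1..n. trend_weight n t * real (Y (int t) x))) s)
     \<longlonglongrightarrow> complex_of_real (exp (- (b0 / (1 - a) ^ 3 * s^2) / 2))"
proof -
  define u where "u n t = s * trend_weight n t" for n t
  define zz where "zz n t = zback a (u n) n (n - t)" for n t
  define f1 where "f1 n = ((real n - 1)/2)/sqrt (Vn n)" for n :: nat
  define g1 where "g1 n = 1/sqrt (Vn n)" for n :: nat
  define ab where "ab = \<bar>s\<bar>"
  define U where "U n = ab * f1 n" for n
  define dd where "dd n = ab * g1 n" for n
  define L where "L = -(s^2)/(2*(1-a)^3)"
  define S where "S n = (\<Sum>t=2..n. exp (zz n t) - 1)" for n
  define E where "E n = (\<integral>x. exp (zz n 1 * of_nat (Y 1 x)) \<partial>M)" for n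
  define K where "K = 1/(1-a)"
  have a0: "0 \<le> a" using a_pos by simp
  have zRe: "Re (zz n t) \<le> 0" for n t unfolding zz_def by (rule zback_Re[OF a0])
  have zn: "zz n n = \<i> * complex_of_real (u n n)" for n unfolding zz_def by simp
  have zrec: "1 \<le> t \<Longrightarrow> t < n \<Longrightarrow> zz n t = \<i> * complex_of_real (u n t) + complex_of_real a * (exp (zz n (Suc t)) - 1)" for n t
    unfolding zz_def by (rule zback_rec)
  have f1_lim: "f1 \<longlonglongrightarrow> 0" unfolding f1_def Vn_def by (rule lim_f1)
  have f2_lim: "(\<lambda>n. real n * f1 n ^ 3) \<longlonglongrightarrow> 0" unfolding f1_def Vn_def by (rule lim_f2)
  have f3_lim: "(\<lambda>n. real n * f1 n * g1 n) \<longlonglongrightarrow> 0" unfolding f1_def g1_def Vn_def by (rule lim_f3)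
  have U_lim: "U \<longlonglongrightarrow> 0" unfolding U_def using tendsto_mult[OF tendsto_const f1_lim, of "ab"] by simp
  have bnd_eq: "bnd a (U n) (dd n) n = K*(2*K*(ab * f1 n) + 16*K^3*(ab^3 * (real n * f1 n ^ 3)) + 2*a*K^3*(ab * f1 n)^2
      + 24*a*K^4*(ab^3 * (real n * f1 n ^ 3)) + 2*a*K^3*(ab*ab*(real n * f1 n * g1 n)) + K^2*(ab * f1 n)^2/2)" for n
    unfolding bnd_alt[OF a_lt1] K_def[symmetric] U_def dd_def by (simp add: algebra_simps power3_eq_cube)
  have bnd_lim: "(\<lambda>n. bnd a (U n) (dd n) n) \<longlonglongrightarrow> 0"
  proof -
    have "(\<lambda>n. K*(2*K*(ab * f1 n) + 16*K^3*(ab^3 * (real n * f1 n ^ 3)) + 2*a*K^3*(ab * f1 n)^2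
      + 24*a*K^4*(ab^3 * (real n * f1 n ^ 3)) + 2*a*K^3*(ab*ab*(real n * f1 n * g1 n)) + K^2*(ab * f1 n)^2/2))
      \<longlonglongrightarrow> K*(2*K*(ab * 0) + 16*K^3*(ab^3 * 0) + 2*a*K^3*(ab * 0)^2
      + 24*a*K^4*(ab^3 * 0) + 2*a*K^3*(ab*ab*0) + K^2*(ab * 0)^2/2)"
      by (intro tendsto_intros f1_lim f2_lim f3_lim) auto
    then show ?thesis unfolding bnd_eq by simp
  qed
  have pos: "0 < (1-a)^2/12" using a_lt1 by simp
  have ev: "eventually (\<lambda>n. 2 \<le> n \<and> 12 * U n \<le> (1-a)^2) sequentially"
  proof -
    have "eventually (\<lambda>n. U n < (1-a)^2/12) sequentially" using order_tendstoD(2)[OF U_lim pos] .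
    moreover have "eventually (\<lambda>n. 2 \<le> n) sequentially" by (rule eventually_ge_at_top)
    ultimately show ?thesis by eventually_elim auto
  qed
  have facts: "cmod (S n - complex_of_real L) \<le> bnd a (U n) (dd n) n \<and> cmod (zz n 1) \<le> 2 * U n/(1-a)"
    if n: "2 \<le> n" and sm: "12 * U n \<le> (1-a)^2" for n
  proof -
    have Vp: "0 < Vn n" using Vn_pos[OF n] .
    have "(\<Sum>t=1..n. u n t) = s * (\<Sum>t=1..n. trend_weight n t)" unfolding u_def by (rule sum_distrib_left[symmetric])
    then have usum: "(\<Sum>t=1..n. u n t) = 0" unfolding tw_sum by simp
    have "(\<Sum>t=1..n. (u n t)^2) = s^2 * (\<Sum>t=1..n. (trend_weight n t)^2)" unfolding u_def power_mult_distrib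
      by (rule sum_distrib_left[symmetric])
    then have usq: "(\<Sum>t=1..n. (u n t)^2) = s^2" unfolding tw_sq[OF n] by simp
    have uU: "\<bar>u n t\<bar> \<le> U n" if "1 \<le> t" "t \<le> n" for t
      unfolding u_def U_def f1_def abs_mult ab_def using tw_bound[OF that] by (intro mult_left_mono) auto
    have ud: "\<bar>u n (Suc t) - u n t\<bar> \<le> dd n" for t
    proof -
      have "u n (Suc t) - u n t = s * (trend_weight n (Suc t) - trend_weight n t)" unfolding u_def by (simp add: algebra_simps)
      then show ?thesis unfolding dd_def g1_def tw_diff ab_def using Vn_nonneg[of n] by (simp add: abs_mult)
    qed
    have "cmod ((\<Sum>t=2..n. exp (zz n t) - 1) - complex_of_real (-(s^2)/(2*(1-a)^3))) \<le> bnd a (U n) (dd n) n"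
      by (rule det_bound[OF a_pos a_lt1 n usum usq uU ud sm zn zrec]) auto
    moreover have "cmod (zz n 1) \<le> 2 * U n/(1-a)"
      by (rule det_zbound[OF a_pos a_lt1 _ uU sm zn zrec]) (use n in auto)
    ultimately show ?thesis unfolding S_def L_def by simp
  qed
  have S_lim: "S \<longlonglongrightarrow> complex_of_real L"
  proof (rule LIM_zero_cancel, rule tendsto_norm_zero_cancel, rule tendsto_sandwich[OF _ _ tendsto_const bnd_lim])
    show "eventually (\<lambda>n. 0 \<le> cmod (S n - complex_of_real L)) sequentially" by simp
    show "eventually (\<lambda>n. cmod (S n - complex_of_real L) \<le> bnd a (U n) (dd n) n) sequentially"
      using ev by eventually_elim (use facts in auto)
  qed
  have z1_lim: "(\<lambda>n. zz n 1) \<longlonglongrightarrow> 0"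
  proof (rule tendsto_norm_zero_cancel, rule tendsto_sandwich[OF _ _ tendsto_const])
    show "eventually (\<lambda>n. 0 \<le> cmod (zz n 1)) sequentially" by simp
    show "eventually (\<lambda>n. cmod (zz n 1) \<le> 2 * U n/(1-a)) sequentially"
      using ev by eventually_elim (use facts in auto)
    have "(\<lambda>n. 2 * U n/(1-a)) \<longlonglongrightarrow> 2 * 0/(1-a)" by (intro tendsto_intros U_lim) (use a_lt1 in auto)
    then show "(\<lambda>n. 2 * U n/(1-a)) \<longlonglongrightarrow> 0" by simp
  qed
  have E_lim: "E \<longlonglongrightarrow> 1"
  proof -
    have "E \<longlonglongrightarrow> (\<integral>x. exp (0 * of_nat (Y 1 x)) \<partial>M)"
      unfolding E_def
    proof (rule integral_dominated_convergence[where w="\<lambda>_. 1"])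
      show "(\<lambda>x. exp (0 * of_nat (Y 1 x))) \<in> borel_measurable M" by (rule Y_fun_meas)
      show "\<And>i. (\<lambda>x. exp (zz i 1 * of_nat (Y 1 x))) \<in> borel_measurable M" by (rule Y_fun_meas)
      show "integrable M (\<lambda>_. 1::real)" by simp
      show "AE x in M. (\<lambda>i. exp (zz i 1 * of_nat (Y 1 x))) \<longlonglongrightarrow> exp (0 * of_nat (Y 1 x))"
        by (intro AE_I2 tendsto_intros z1_lim)
      show "\<And>i. AE x in M. norm (exp (zz i 1 * of_nat (Y 1 x))) \<le> 1"
        by (intro AE_I2 norm_exp_nat_le1 zRe)
    qed
    then show ?thesis by (simp add: prob_space)
  qed
  have lim: "(\<lambda>n. E n * exp (complex_of_real b0 * S n)) \<longlonglongrightarrow> 1 * exp (complex_of_real b0 * complex_of_real L)"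
    by (intro tendsto_intros E_lim S_lim)
  have eq_ev: "eventually (\<lambda>n. E n * exp (complex_of_real b0 * S n)
      = char (distr M borel (\<lambda>x. \<Sum>t=1..n. trend_weight n t * real (Y (int t) x))) s) sequentially"
  proof (rule eventually_mono[OF eventually_ge_at_top[of 1]])
    fix n :: nat assume n: "1 \<le> n"
    show "E n * exp (complex_of_real b0 * S n)
      = char (distr M borel (\<lambda>x. \<Sum>t=1..n. trend_weight n t * real (Y (int t) x))) s"
      unfolding char_theta E_def S_def
      using char_formula[where n=n and z="zz n" and u="u n", OF n] zRe zn zrec unfolding u_def by simp
  qed
  have "exp (complex_of_real b0 * complex_of_real L) = complex_of_real (exp (- (b0 / (1 - a) ^ 3 * s^2) / 2))"
  proof -
    have "b0 * L = - (b0 / (1 - a) ^ 3 * s^2) / 2" unfolding L_def by (simp add: field_simps)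
    then show ?thesis by (metis exp_of_real of_real_mult)
  qed
  then show ?thesis using Lim_transform_eventually[OF lim eq_ev] by simp
qed

end

theorem proposition5p1:
  fixes M :: "'a measure" and Y :: "int \<Rightarrow> 'a \<Rightarrow> nat" and lam :: "int \<Rightarrow> 'a \<Rightarrow> real"
    and a b0 :: real
  assumes "prob_space M"
    and "0 < a" and "a < 1" and "0 \<le> b0"
    and meas: "\<And>t. Y t \<in> measurable M (count_space UNIV)"
    and lam_def: "\<And>t x. x \<in> space M \<Longrightarrow> lam t x = a * real (Y (t - 1) x) + b0"
    and cond_pois: "\<And>t k. AE x in M.
          real_cond_exp M (past M Y lam t) (indicator {x \<in> space M. Y t x = k}) x
            = pois_prob (lam t x) k"
    and stationary: "\<And>h. distr M (PiM UNIV (\<lambda>_. count_space UNIV)) (\<lambda>x t. Y (t + h) x)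
          = distr M (PiM UNIV (\<lambda>_. count_space UNIV)) (\<lambda>x t. Y t x)"
  shows "weak_conv_m
           (\<lambda>n. distr M borel (\<lambda>x. \<Sum>t=1..n. trend_weight n t * real (Y (int t) x)))
           (normal_law (b0 / (1 - a) ^ 3))"
proof -
  interpret I: inarch M Y lam a b0
  proof (rule inarch.intro[OF assms(1)], rule inarch_axioms.intro)
  qed (use assms in auto)
  have v0: "0 \<le> b0 / (1 - a) ^ 3" using assms(3,4) by simp
  show ?thesis
  proof (rule levy_continuity)
    fix n
    show "real_distribution (distr M borel (\<lambda>x. \<Sum>t=1..n. trend_weight n t * real (Y (int t) x)))"
    proof -
      have m: "(\<lambda>x. \<Sum>t=1..n. trend_weight n t * real (Y (int t) x)) \<in> borel_measurable M"
        by (intro borel_measurable_sum) (rule I.Y_fun_meas)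
      show ?thesis unfolding real_distribution_def real_distribution_axioms_def
        using I.prob_space_distr[OF m] by simp
    qed
  next
    show "real_distribution (normal_law (b0 / (1 - a) ^ 3))" by (rule normal_law_rd[OF v0])
  next
    fix t
    show "(\<lambda>n. char (distr M borel (\<lambda>x. \<Sum>t=1..n. trend_weight n t * real (Y (int t) x))) t)
        \<longlonglongrightarrow> char (normal_law (b0 / (1 - a) ^ 3)) t"
      unfolding char_normal_law[OF v0] using I.char_conv[of t] by (simp add: mult.commute)
  qed
qed

end
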